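(* Let $f:\mathbb{R}^n\to\mathbb{R}^n$ be continuously differentiable, $b_0\in\mathbb{R}^n_{\ge0}$, $\mu,\theta>0$, $r:=\mu/\theta$, and let $x^*\in\mathbb{R}^n_{\ge0}$, $u_*>0$ satisfy $x^*_n=r$ and $f(x^* )-u_*re_n+b_0=0$. Assume that the Jacobian $J:=\partial f/\partial x(x^* )$ is Metzler and Hurwitz stable. Then for all $\eta,k_p>0$ the equilibrium $\big(x^*,\ \mu/(\eta u_* ),\ u_*/k_p\big)$ of $\dot x=f(x)-k_px_nz_2e_n+b_0$, $\dot z_1=\mu-\eta k_pz_1z_2$, $\dot z_2=\theta x_n-\eta k_pz_1z_2$ is locally exponentially stable.
   Context: $e_i$ standard basis vectors; $x_n=e_n^Tx$. Metzler: all off-diagonal entries nonnegative (this holds for instance when $f$ is cooperative). Hurwitz stable: all eigenvalues have negative real part. An equilibrium is called locally exponentially stable here if the Jacobian matrix of the vector field at the equilibrium is Hurwitz stable. *)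

theory Defs
  imports "HOL-Analysis.Analysis"
begin

text \<open>Complex eigenvalue of a real linear map L on a real vector space:
  lambda is an eigenvalue of the complexification, i.e. L(u + i v) = lambda (u + i v)
  for some nonzero complex vector u + i v, written in real and imaginary parts.\<close>
definition complex_eigenvalue :: "('a::real_vector \<Rightarrow> 'a) \<Rightarrow> complex \<Rightarrow> bool" where
  "complex_eigenvalue L lam \<longleftrightarrow>
     (\<exists>u v. (u \<noteq> 0 \<or> v \<noteq> 0) \<and>
        L u = Re lam *\<^sub>R u - Im lam *\<^sub>R v \<and>
        L v = Im lam *\<^sub>R u + Re lam *\<^sub>R v)"

definition hurwitz_lin :: "('a::real_vector \<Rightarrow> 'a) \<Rightarrow> bool" where
  "hurwitz_lin L \<longleftrightarrow> (\<forall>lam. complex_eigenvalue L lam \<longrightarrow> Re lam < 0)"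

definition hurwitz_mat :: "real^'n^'n \<Rightarrow> bool" where
  "hurwitz_mat A \<longleftrightarrow> hurwitz_lin (\<lambda>v. A *v v)"

definition metzler :: "real^'n^'n \<Rightarrow> bool" where
  "metzler A \<longleftrightarrow> (\<forall>i j. i \<noteq> j \<longrightarrow> 0 \<le> A $ i $ j)"

definition loc_exp_stable :: "('a::euclidean_space \<Rightarrow> 'a) \<Rightarrow> 'a \<Rightarrow> bool" where
  "loc_exp_stable F xe \<longleftrightarrow> F xe = 0 \<and>
     (\<exists>F'. (F has_derivative F') (at xe) \<and> hurwitz_lin F')"

end

theory Submission imports Defs begin

lemma metzler_row_nonneg:
  fixes A :: "real^'n^'n"
  assumes "metzler A" "\<forall>j. 0 \<le> w$j" "c \<ge> - A$i$i"
  shows "0 \<le> (A *v w)$i + c * w$i"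
proof -
  have "(A *v w)$i + c * w$i = (\<Sum>j\<in>UNIV. A$i$j * w$j) + (\<Sum>j\<in>UNIV. (if j = i then c * w$j else 0))"
    by (simp add: matrix_vector_mult_def)
  also have "\<dots> = (\<Sum>j\<in>UNIV. (A$i$j + (if j = i then c else 0)) * w$j)"
    unfolding sum.distrib[symmetric] by (rule sum.cong) (auto simp: distrib_right)
  also have "\<dots> \<ge> 0"
  proof (rule sum_nonneg)
    fix j
    have "0 \<le> A$i$j + (if j = i then c else 0)"
      using assms(1,3) unfolding metzler_def by (cases "j = i") auto
    then show "0 \<le> (A$i$j + (if j = i then c else 0)) * w$j"
      using assms(2) by simp
  qed
  finally show ?thesis .
qed

lemma metzler_hurwitz_no_nonneg:
  fixes A :: "real^'n^'n" and y :: "real^'n"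
  assumes met: "metzler A" and hur: "hurwitz_mat A"
    and y0: "\<forall>i. 0 \<le> y$i" and ynz: "y \<noteq> 0" and Ay: "\<forall>i. 0 \<le> (A *v y)$i"
  shows False
proof -
  define c where "c = (\<Sum>i\<in>UNIV. \<bar>A$i$i\<bar>) + 1"
  have cge: "c \<ge> - A$i$i + 1" for i
  proof -
    have "\<bar>A$i$i\<bar> \<le> (\<Sum>i\<in>UNIV. \<bar>A$i$i\<bar>)"
      by (rule member_le_sum) auto
    then show ?thesis unfolding c_def by linarith
  qed
  define K where "K = {x::real^'n. (\<forall>i. 0 \<le> x$i) \<and> (\<Sum>i\<in>UNIV. x$i) = 1 \<and> (\<forall>i. 0 \<le> (A *v x)$i)}"
  define B where "B = (\<lambda>x::real^'n. A *v x + c *\<^sub>R x)"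
  define S where "S = (\<lambda>x::real^'n. \<Sum>i\<in>UNIV. B x $ i)"
  define g where "g = (\<lambda>x. (1 / S x) *\<^sub>R B x)"
  have Bnn: "0 \<le> B x $ i" if "\<forall>j. 0 \<le> x$j" for x i
    using metzler_row_nonneg[OF met that, where c=c and i=i] cge[of i] by (simp add: B_def)
  have Bge: "x $ i \<le> B x $ i" if "\<forall>j. 0 \<le> x$j" for x i
    using metzler_row_nonneg[OF met that, where c="c - 1" and i=i] cge[of i] by (simp add: B_def algebra_simps)
  have Sge: "S x \<ge> 1" if "x \<in> K" for x
  proof -
    have "1 = (\<Sum>i\<in>UNIV. x$i)" using that by (simp add: K_def)
    also have "\<dots> \<le> S x" unfolding S_def by (rule sum_mono) (use that Bge in \<open>auto simp: K_def\<close>)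
    finally show ?thesis .
  qed
  have ysum: "(\<Sum>i\<in>UNIV. y$i) > 0"
  proof -
    obtain i where "y$i \<noteq> 0" using ynz by (metis vec_eq_iff zero_index)
    then have "y$i > 0" using y0 by (metis order_le_less)
    moreover have "y$i \<le> (\<Sum>i\<in>UNIV. y$i)" by (rule member_le_sum) (use y0 in auto)
    ultimately show ?thesis by linarith
  qed
  have Kne: "K \<noteq> {}"
  proof -
    define z where "z = (1 / (\<Sum>i\<in>UNIV. y$i)) *\<^sub>R y"
    have "\<forall>i. 0 \<le> z$i" using ysum y0 by (simp add: z_def)
    moreover have "(\<Sum>i\<in>UNIV. z$i) = 1" using ysum
      by (simp add: z_def sum_divide_distrib[symmetric])
    moreover have "\<forall>i. 0 \<le> (A *v z)$i" using ysum Ay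
      by (simp add: z_def matrix_vector_mult_scaleR)
    ultimately have "z \<in> K" unfolding K_def by blast
    then show ?thesis by auto
  qed
  have Kclosed: "closed K"
  proof -
    have "K = (\<Inter>i. {x. 0 \<le> x$i}) \<inter> {x. (\<Sum>i\<in>UNIV. x$i) = 1} \<inter> (\<Inter>i. {x. 0 \<le> (A *v x)$i})"
      unfolding K_def by auto
    moreover have "closed {x::real^'n. 0 \<le> x$i}" for i
      by (intro closed_Collect_le continuous_intros)
    moreover have "closed {x::real^'n. (\<Sum>i\<in>UNIV. x$i) = 1}"
      by (intro closed_Collect_eq continuous_intros)
    moreover have "closed {x::real^'n. 0 \<le> (A *v x)$i}" for i
      by (intro closed_Collect_le continuous_intros)
    ultimately show ?thesis by (auto intro!: closed_Int closed_INT)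
  qed
  have Kbounded: "bounded K"
  proof -
    have "norm x \<le> (\<Sum>i\<in>UNIV. \<bar>x$i\<bar>)" for x :: "real^'n"
      by (metis norm_le_l1_cart)
    moreover have "(\<Sum>i\<in>UNIV. \<bar>x$i\<bar>) = 1" if "x \<in> K" for x using that by (auto simp: K_def)
    ultimately have "norm x \<le> 1" if "x \<in> K" for x using that by metis
    then show ?thesis by (auto simp: bounded_iff)
  qed
  have Kconvex: "convex K"
    unfolding convex_def
  proof (intro ballI allI impI)
    fix x z :: "real^'n" and a b :: real
    assume x: "x \<in> K" and z: "z \<in> K" and ab: "0 \<le> a" "0 \<le> b" "a + b = 1"
    have "\<forall>i. 0 \<le> (a *\<^sub>R x + b *\<^sub>R z)$i" using x z ab by (simp add: K_def)
    moreover have "(\<Sum>i\<in>UNIV. (a *\<^sub>R x + b *\<^sub>R z)$i) = 1"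
    proof -
      have "(\<Sum>i\<in>UNIV. (a *\<^sub>R x + b *\<^sub>R z)$i) = a * (\<Sum>i\<in>UNIV. x$i) + b * (\<Sum>i\<in>UNIV. z$i)"
        by (simp add: sum.distrib sum_distrib_left)
      then show ?thesis using x z ab by (simp add: K_def)
    qed
    moreover have "\<forall>i. 0 \<le> (A *v (a *\<^sub>R x + b *\<^sub>R z))$i" using x z ab
      by (simp add: K_def matrix_vector_right_distrib matrix_vector_mult_scaleR)
    ultimately show "a *\<^sub>R x + b *\<^sub>R z \<in> K" unfolding K_def by blast
  qed
  have Bcont: "continuous_on K B" unfolding B_def by (intro continuous_intros)
  have Scont: "continuous_on K S" unfolding S_def
    by (intro continuous_on_sum continuous_on_component Bcont)
  have gcont: "continuous_on K g" unfolding g_def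
    by (rule continuous_on_scaleR[OF continuous_on_divide[OF continuous_on_const Scont] Bcont])
       (use Sge in \<open>fastforce\<close>)
  have gK: "g x \<in> K" if xK: "x \<in> K" for x
  proof -
    have x0: "\<forall>j. 0 \<le> x$j" using xK by (simp add: K_def)
    have Sx: "S x \<ge> 1" using Sge[OF xK] .
    have "\<forall>i. 0 \<le> (g x)$i" using Bnn[OF x0] Sx by (simp add: g_def)
    moreover have "(\<Sum>i\<in>UNIV. (g x)$i) = 1" using Sx
      by (simp add: g_def S_def sum_divide_distrib[symmetric])
    moreover have "\<forall>i. 0 \<le> (A *v g x)$i"
    proof
      fix i
      have w0: "\<forall>j. 0 \<le> (A *v x)$j" using xK by (simp add: K_def)
      have "(A *v g x)$i = (1 / S x) * ((A *v (A *v x))$i + c * (A *v x)$i)"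
        by (simp add: g_def B_def matrix_vector_right_distrib matrix_vector_mult_scaleR)
      also have "\<dots> \<ge> 0"
        using metzler_row_nonneg[OF met w0, where c=c and i=i] cge[of i] Sx by simp
      finally show "0 \<le> (A *v g x)$i" .
    qed
    ultimately show ?thesis unfolding K_def by blast
  qed
  obtain x where xK: "x \<in> K" and fx: "g x = x"
    using brouwer[OF compact_eq_bounded_closed[THEN iffD2, OF conjI[OF Kbounded Kclosed]] Kconvex Kne gcont] gK
    by blast
  have Sx: "S x \<ge> 1" using Sge[OF xK] .
  have Bx: "B x = S x *\<^sub>R x"
  proof -
    have "B x = S x *\<^sub>R g x" using Sx by (simp add: g_def)
    then show ?thesis using fx by simp
  qed
  have Ax: "A *v x = (S x - c) *\<^sub>R x"
    using Bx by (simp add: B_def algebra_simps)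
  obtain i where xi: "x$i > 0"
  proof -
    have "(\<Sum>i\<in>UNIV. x$i) = 1" using xK by (simp add: K_def)
    then obtain i where "x$i \<noteq> 0" by (metis sum.neutral zero_neq_one)
    moreover have "x$i \<ge> 0" using xK by (simp add: K_def)
    ultimately show ?thesis by (intro that[of i]) linarith
  qed
  have "0 \<le> (A *v x)$i" using xK by (simp add: K_def)
  then have "0 \<le> (S x - c) * x$i" using Ax by simp
  then have rho: "S x - c \<ge> 0" using xi by (simp add: zero_le_mult_iff)
  have xnz: "x \<noteq> 0" using xi by auto
  have "complex_eigenvalue (\<lambda>v. A *v v) (complex_of_real (S x - c))"
    unfolding complex_eigenvalue_def
    by (rule exI[of _ x], rule exI[of _ 0]) (simp add: Ax xnz)
  then have "Re (complex_of_real (S x - c)) < 0"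
    using hur unfolding hurwitz_mat_def hurwitz_lin_def by blast
  then show False using rho by simp
qed

lemma Re_mult_cnj_le: "Re (a * cnj b) \<le> cmod a * cmod b"
  by (metis complex_Re_le_cmod complex_mod_cnj norm_mult)

lemma Re_self_cnj: "Re (a * cnj a) = (cmod a)^2"
  by (subst cmod_power2) (simp add: power2_eq_square)

lemma metzler_complex_row:
  fixes J :: "real^'n^'n" and V :: "'n \<Rightarrow> complex"
  assumes met: "metzler J" and hur: "hurwitz_mat J" and lam: "Re lam \<ge> 0"
    and eqs: "\<forall>i. lam * V i = (\<Sum>j\<in>UNIV. of_real (J$i$j) * V j) + (if i = k then s else 0)"
    and sk: "Re (s * cnj (V k)) \<le> 0"
  shows "\<forall>i. V i = 0"
proof (rule ccontr)
  assume nz: "\<not> (\<forall>i. V i = 0)"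
  define y where "y = (\<chi> i. cmod (V i))"
  have y0: "\<forall>i. 0 \<le> y$i" by (simp add: y_def)
  have ynz: "y \<noteq> 0" using nz by (auto simp: y_def vec_eq_iff)
  have row: "0 \<le> (J *v y)$i" for i
  proof -
    have e: "lam * V i * cnj (V i) = (\<Sum>j\<in>UNIV. of_real (J$i$j) * (V j * cnj (V i))) + (if i = k then s * cnj (V i) else 0)"
      using eqs[rule_format, of i] by (simp add: distrib_right sum_distrib_right mult.assoc)
    have "Re (lam * V i * cnj (V i)) = Re lam * (y$i)^2"
      by (simp add: y_def mult.assoc Re_self_cnj[simplified])
    moreover have "Re (if i = k then s * cnj (V i) else 0) \<le> 0" using sk by auto
    moreover have "Re (\<Sum>j\<in>UNIV. of_real (J$i$j) * (V j * cnj (V i))) \<le> (\<Sum>j\<in>UNIV. J$i$j * y$j * y$i)"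
      unfolding Re_sum
    proof (rule sum_mono)
      fix j
      show "Re (of_real (J$i$j) * (V j * cnj (V i))) \<le> J$i$j * y$j * y$i"
      proof (cases "j = i")
        case True then show ?thesis by (simp add: y_def Re_self_cnj[simplified] power2_eq_square)
      next
        case False
        then have "J$i$j \<ge> 0" using met by (simp add: metzler_def)
        then show ?thesis using Re_mult_cnj_le[of "V j" "V i"]
          by (simp add: y_def mult.assoc mult_left_mono)
      qed
    qed
    ultimately have "Re lam * (y$i)^2 \<le> y$i * (J *v y)$i"
      using arg_cong[OF e, of Re] by (simp add: matrix_vector_mult_def sum_distrib_left algebra_simps)
    show ?thesis
    proof (cases "y$i = 0")
      case True
      show ?thesis unfolding matrix_vector_mult_def vec_lambda_beta
        by (rule sum_nonneg) (metis True met y0 metzler_def mult_nonneg_nonneg mult_zero_right)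
    next
      case False
      then have "y$i > 0" using y0 by (metis order_le_less)
      with \<open>Re lam * (y$i)^2 \<le> y$i * (J *v y)$i\<close> have "Re lam * y$i \<le> (J *v y)$i"
        by (simp add: power2_eq_square)
      moreover have "0 \<le> Re lam * y$i" using lam y0 by simp
      ultimately show ?thesis by linarith
    qed
  qed
  show False using metzler_hurwitz_no_nonneg[OF met hur y0 ynz] row by blast
qed

lemma deriv_F:
  fixes f :: "real^'n \<Rightarrow> real^'n" and f' :: "real^'n \<Rightarrow> real^'n \<Rightarrow> real^'n"
    and k :: 'n and b0 xs :: "real^'n" and \<mu> \<theta> u \<eta> kp z1s z2s :: real
  assumes deriv: "\<And>x. (f has_derivative f' x) (at x)"
  shows "((\<lambda>(x::real^'n, z1::real, z2::real).
         (f x - (kp * x $ k * z2) *\<^sub>R axis k 1 + b0,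
          \<mu> - \<eta> * kp * z1 * z2,
          \<theta> * x $ k - \<eta> * kp * z1 * z2)) has_derivative
    (\<lambda>(dx::real^'n, d1::real, d2::real).
         (f' xs dx - (kp * (dx $ k * z2s + xs $ k * d2)) *\<^sub>R axis k 1,
          - (\<eta> * kp * (d1 * z2s + z1s * d2)),
          \<theta> * dx $ k - \<eta> * kp * (d1 * z2s + z1s * d2)))) (at (xs, z1s, z2s))"
proof -
  have D: "((\<lambda>p::(real^'n) \<times> real \<times> real. f (fst p)) has_derivative (\<lambda>d. f' xs (fst d))) (at (xs, z1s, z2s))"
  proof -
    have "(fst has_derivative fst) (at (xs, z1s, z2s))"
      by (rule has_derivative_fst[OF has_derivative_ident])
    from has_derivative_compose[OF this, of f "f' xs"] deriv[of xs] show ?thesis by simp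
  qed
  have C: "((\<lambda>p::(real^'n) \<times> real \<times> real. fst p $ k) has_derivative (\<lambda>d. fst d $ k)) (at (xs, z1s, z2s))"
    by (rule bounded_linear.has_derivative[OF bounded_linear_vec_nth has_derivative_fst[OF has_derivative_ident]])
  show ?thesis
    unfolding case_prod_beta'
    apply (rule has_derivative_eq_rhs)
     apply (rule D C derivative_intros)+
    apply (simp add: fun_eq_iff algebra_simps)
    done
qed

theorem mainTheorem15:
  fixes f :: "real^'n \<Rightarrow> real^'n" and f' :: "real^'n \<Rightarrow> real^'n \<Rightarrow> real^'n"
    and k :: 'n and b0 xs :: "real^'n" and \<mu> \<theta> u :: real
  assumes deriv: "\<And>x. (f has_derivative f' x) (at x)"
    and cont: "continuous_on UNIV (\<lambda>x. matrix (f' x))"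
    and b0: "\<forall>i. 0 \<le> b0 $ i"
    and mu: "\<mu> > 0" and theta: "\<theta> > 0"
    and xs: "\<forall>i. 0 \<le> xs $ i" and u: "u > 0"
    and xsk: "xs $ k = \<mu> / \<theta>"
    and eq: "f xs - (u * (\<mu> / \<theta>)) *\<^sub>R axis k 1 + b0 = 0"
    and metz: "metzler (matrix (f' xs))"
    and hur: "hurwitz_mat (matrix (f' xs))"
  shows "\<forall>\<eta> kp. \<eta> > 0 \<longrightarrow> kp > 0 \<longrightarrow>
    loc_exp_stable
      (\<lambda>(x::real^'n, z1::real, z2::real).
         (f x - (kp * x $ k * z2) *\<^sub>R axis k 1 + b0,
          \<mu> - \<eta> * kp * z1 * z2,
          \<theta> * x $ k - \<eta> * kp * z1 * z2))
      (xs, \<mu> / (\<eta> * u), u / kp)"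
proof (intro allI impI)
  fix \<eta> kp :: real assume eta: "\<eta> > 0" and kp: "kp > 0"
  define J where "J = matrix (f' xs)"
  define z1s where "z1s = \<mu> / (\<eta> * u)"
  define z2s where "z2s = u / kp"
  define F' where "F' = (\<lambda>(dx::real^'n, d1::real, d2::real).
         (f' xs dx - (kp * (dx $ k * z2s + xs $ k * d2)) *\<^sub>R axis k 1,
          - (\<eta> * kp * (d1 * z2s + z1s * d2)),
          \<theta> * dx $ k - \<eta> * kp * (d1 * z2s + z1s * d2)))"
  have bl: "bounded_linear (f' xs)" using deriv[of xs] has_derivative_bounded_linear by blast
  have Jv: "f' xs v = J *v v" for v
    using fun_cong[OF matrix_vector_mul(3)[OF bl], of v] unfolding J_def by simp
  have c1: "kp * z2s = u" using kp by (simp add: z2s_def)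
  have c2: "\<eta> * kp * z2s = \<eta> * u" using kp by (simp add: z2s_def)
  have c3: "\<eta> * kp * z1s = kp * \<mu> / u" using kp eta u by (simp add: z1s_def z2s_def)
  have hF': "hurwitz_lin F'"
    unfolding hurwitz_lin_def
  proof (intro allI impI)
    fix lam :: complex
    assume "complex_eigenvalue F' lam"
    then obtain p q where nz: "p \<noteq> 0 \<or> q \<noteq> 0" and Ep: "F' p = Re lam *\<^sub>R p - Im lam *\<^sub>R q"
      and Eq: "F' q = Im lam *\<^sub>R p + Re lam *\<^sub>R q"
      unfolding complex_eigenvalue_def by blast
    obtain pv p1 p2 where p: "p = (pv, p1, p2)" by (cases p) auto
    obtain qv q1 q2 where q: "q = (qv, q1, q2)" by (cases q) auto
    define \<sigma> where "\<sigma> = Re lam"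
    define \<omega> where "\<omega> = Im lam"
    define a where "a = \<eta> * u"
    define b where "b = kp * \<mu> / u"
    define r where "r = \<mu> / \<theta>"
    have a: "a > 0" using eta u by (simp add: a_def)
    have b: "b > 0" using mu u kp by (simp add: b_def)
    have r: "r > 0" using mu theta by (simp add: r_def)
    have lin: "\<eta> * kp * (x1 * z2s + z1s * x2) = a * x1 + b * x2" for x1 x2
    proof -
      have "\<eta> * kp * (x1 * z2s + z1s * x2) = (\<eta> * kp * z2s) * x1 + (\<eta> * kp * z1s) * x2"
        by (simp add: algebra_simps)
      then show ?thesis using c2 c3 by (simp add: a_def b_def)
    qed
    have EpA: "f' xs pv - (kp * (pv $ k * z2s + xs $ k * p2)) *\<^sub>R axis k 1 = \<sigma> *\<^sub>R pv - \<omega> *\<^sub>R qv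
       \<and> - (\<eta> * kp * (p1 * z2s + z1s * p2)) = \<sigma> * p1 - \<omega> * q1
       \<and> \<theta> * pv $ k - \<eta> * kp * (p1 * z2s + z1s * p2) = \<sigma> * p2 - \<omega> * q2"
      using Ep unfolding p q F'_def \<sigma>_def \<omega>_def by simp
    have EqA: "f' xs qv - (kp * (qv $ k * z2s + xs $ k * q2)) *\<^sub>R axis k 1 = \<omega> *\<^sub>R pv + \<sigma> *\<^sub>R qv
       \<and> - (\<eta> * kp * (q1 * z2s + z1s * q2)) = \<omega> * p1 + \<sigma> * q1
       \<and> \<theta> * qv $ k - \<eta> * kp * (q1 * z2s + z1s * q2) = \<omega> * p2 + \<sigma> * q2"
      using Eq unfolding p q F'_def \<sigma>_def \<omega>_def by simp
    have Ep1: "f' xs pv - (kp * (pv $ k * z2s + xs $ k * p2)) *\<^sub>R axis k 1 = \<sigma> *\<^sub>R pv - \<omega> *\<^sub>R qv"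
      and Ep2: "- (a * p1 + b * p2) = \<sigma> * p1 - \<omega> * q1"
      and Ep3: "\<theta> * pv $ k - (a * p1 + b * p2) = \<sigma> * p2 - \<omega> * q2"
      using EpA unfolding lin by auto
    have Eq1: "f' xs qv - (kp * (qv $ k * z2s + xs $ k * q2)) *\<^sub>R axis k 1 = \<omega> *\<^sub>R pv + \<sigma> *\<^sub>R qv"
      and Eq2: "- (a * q1 + b * q2) = \<omega> * p1 + \<sigma> * q1"
      and Eq3: "\<theta> * qv $ k - (a * q1 + b * q2) = \<omega> * p2 + \<sigma> * q2"
      using EqA unfolding lin by auto
    have Ep1i: "(J *v pv)$i - (if i = k then u * pv$k + kp * r * p2 else 0) = \<sigma> * pv$i - \<omega> * qv$i" for i
      using arg_cong[OF Ep1, of "\<lambda>v. v $ i"] c1 xsk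
      by (auto simp: Jv axis_def r_def algebra_simps)
    have Eq1i: "(J *v qv)$i - (if i = k then u * qv$k + kp * r * q2 else 0) = \<omega> * pv$i + \<sigma> * qv$i" for i
      using arg_cong[OF Eq1, of "\<lambda>v. v $ i"] c1 xsk
      by (auto simp: Jv axis_def r_def algebra_simps)
    show "Re lam < 0"
    proof (rule ccontr)
      assume "\<not> Re lam < 0"
      then have sig: "\<sigma> \<ge> 0" by (simp add: \<sigma>_def)
      define V where "V = (\<lambda>i. Complex (pv$i) (qv$i))"
      define s where "s = - (complex_of_real u * V k + complex_of_real (kp * r) * Complex p2 q2)"
      have lamC: "lam = Complex \<sigma> \<omega>" by (simp add: \<sigma>_def \<omega>_def)
      have rows: "\<forall>i. lam * V i = (\<Sum>j\<in>UNIV. of_real (J$i$j) * V j) + (if i = k then s else 0)"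
      proof
        fix i
        show "lam * V i = (\<Sum>j\<in>UNIV. of_real (J$i$j) * V j) + (if i = k then s else 0)"
          using Ep1i[of i] Eq1i[of i]
          by (simp add: complex_eq_iff lamC V_def s_def Re_sum Im_sum matrix_vector_mult_def algebra_simps split: if_splits)
      qed
      show False
      proof (cases "Re (s * cnj (V k)) \<le> 0")
        case True
        have V0: "\<forall>i. V i = 0"
          by (rule metzler_complex_row[OF metz[folded J_def] hur[folded J_def] _ rows True]) (simp add: lamC sig)
        then have pv0: "pv = 0" and qv0: "qv = 0"
          by (auto simp: V_def vec_eq_iff complex_eq_iff)
        have "kp * r * p2 = 0" using Ep1i[of k] pv0 qv0 by (simp add: matrix_vector_mult_def)
        then have p20: "p2 = 0" using kp r by simp
        have "kp * r * q2 = 0" using Eq1i[of k] pv0 qv0 by (simp add: matrix_vector_mult_def)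
        then have q20: "q2 = 0" using kp r by simp
        have "(\<sigma> + a) * (p1^2 + q1^2) = 0"
          using Ep2 Eq2 p20 q20 by algebra
        moreover have "\<sigma> + a > 0" using sig a by simp
        ultimately have "p1^2 + q1^2 = 0" by simp
        then have "p1 = 0" "q1 = 0" by (simp_all add: sum_power2_eq_zero_iff)
        then show False using nz pv0 qv0 p20 q20 by (simp add: p q zero_prod_def)
      next
        case False
        then have "- u * ((pv$k)^2 + (qv$k)^2) - kp * r * (p2 * pv$k + q2 * qv$k) > 0"
          by (simp add: s_def V_def power2_eq_square algebra_simps)
        moreover have "u * ((pv$k)^2 + (qv$k)^2) \<ge> 0" using u by simp
        ultimately have neg: "kp * r * (p2 * pv$k + q2 * qv$k) < 0" by linarith
        have key: "\<theta> * b * (p2 * pv$k + q2 * qv$k) =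
             \<sigma> * (b * (p2^2 + q2^2) + (\<sigma> + a) * (p1^2 + q1^2)) + \<omega>^2 * (p1^2 + q1^2)"
          using Ep2 Eq2 Ep3 Eq3 by algebra
        have "0 \<le> \<sigma> * (b * (p2^2 + q2^2) + (\<sigma> + a) * (p1^2 + q1^2)) + \<omega>^2 * (p1^2 + q1^2)"
          using sig a b by (intro add_nonneg_nonneg mult_nonneg_nonneg) auto
        then have "0 \<le> p2 * pv$k + q2 * qv$k"
          using key theta b by (metis mult_pos_pos zero_le_mult_iff not_le)
        then show False using neg kp r by (simp add: zero_le_mult_iff mult_less_0_iff)
      qed
    qed
  qed
  show "loc_exp_stable
      (\<lambda>(x::real^'n, z1::real, z2::real).
         (f x - (kp * x $ k * z2) *\<^sub>R axis k 1 + b0,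
          \<mu> - \<eta> * kp * z1 * z2,
          \<theta> * x $ k - \<eta> * kp * z1 * z2))
      (xs, \<mu> / (\<eta> * u), u / kp)"
    unfolding loc_exp_stable_def
  proof (intro conjI exI[of _ F'])
    have "kp * xs $ k * (u / kp) = u * (\<mu> / \<theta>)" using kp xsk by simp
    moreover have "\<eta> * kp * (\<mu> / (\<eta> * u)) * (u / kp) = \<mu>" using kp eta u by simp
    moreover have "\<theta> * xs $ k = \<mu>" using xsk theta by simp
    ultimately show "(\<lambda>(x::real^'n, z1::real, z2::real).
         (f x - (kp * x $ k * z2) *\<^sub>R axis k 1 + b0,
          \<mu> - \<eta> * kp * z1 * z2,
          \<theta> * x $ k - \<eta> * kp * z1 * z2)) (xs, \<mu> / (\<eta> * u), u / kp) = 0"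
      using eq by (simp add: zero_prod_def)
    show "((\<lambda>(x::real^'n, z1::real, z2::real).
         (f x - (kp * x $ k * z2) *\<^sub>R axis k 1 + b0,
          \<mu> - \<eta> * kp * z1 * z2,
          \<theta> * x $ k - \<eta> * kp * z1 * z2)) has_derivative F') (at (xs, \<mu> / (\<eta> * u), u / kp))"
      unfolding F'_def z1s_def[symmetric] z2s_def[symmetric] by (rule deriv_F[OF deriv])
  qed (rule hF')
qed

end
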